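(* Let $0<\varepsilon\le1/2$, $q\in(0,1]$ and let $(G_n)$ be an expander sequence. Let each $\tilde G_n$ be obtained by deleting edges of $G_n$ such that each vertex keeps at least a $(1/2+\varepsilon)$ fraction of its edges, and let $I_t=I_t^{(pull)}$ for pull on $\tilde G_n$. Let further $q\in(0,1)$ and $|I_t|\le n/2$. Then for $\tau=-\log n/\log(1-q)$ and all $c<1$, whp $|I_{t+c\tau}|<n$.
   Context: pull protocol: in each synchronous round every uninformed vertex chooses a neighbour independently and uniformly at random, and if that neighbour is informed and the transmission succeeds (independently with probability $q$), the asking vertex becomes informed. $I_t$ is the set of vertices informed at the beginning of round $t$; probabilities are conditional on $I_t$. An expander sequence is a sequence $(G_n)$ of connected graphs, $G_n$ on $n$ vertices with minimum degree $\delta_n$, maximum degree $\Delta_n$, and $\lambda_n=\max\{|\mu_2|,|\mu_n|\}$ (adjacency eigenvalues), with $\Delta_n/\delta_n=1+o(1)$ and $\lambda_n=o(\Delta_n)$. "Keeps at least a $(1/2+\varepsilon)$ fraction" means $d_{\tilde G_n}(v)\ge(1/2+\varepsilon)d_{G_n}(v)$. whp means with probability $1-o(1)$ as $n\to\infty$; natural log. *)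

theory Defs
  imports "HOL-Probability.Probability" "Jordan_Normal_Form.Char_Poly"
begin

definition simple_graph :: "nat \<Rightarrow> (nat \<Rightarrow> nat \<Rightarrow> bool) \<Rightarrow> bool" where
  "simple_graph n E \<longleftrightarrow> (\<forall>u v. E u v \<longrightarrow> u < n \<and> v < n \<and> u \<noteq> v \<and> E v u)"

definition nbrs :: "(nat \<Rightarrow> nat \<Rightarrow> bool) \<Rightarrow> nat \<Rightarrow> nat set" where
  "nbrs E v = {u. E v u}"

definition deg :: "(nat \<Rightarrow> nat \<Rightarrow> bool) \<Rightarrow> nat \<Rightarrow> nat" where
  "deg E v = card (nbrs E v)"

definition graph_connected :: "nat \<Rightarrow> (nat \<Rightarrow> nat \<Rightarrow> bool) \<Rightarrow> bool" where
  "graph_connected n E \<longleftrightarrow> n > 0 \<and> (\<forall>u<n. \<forall>v<n. (E\<^sup>*\<^sup>*) u v)"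

definition min_deg :: "nat \<Rightarrow> (nat \<Rightarrow> nat \<Rightarrow> bool) \<Rightarrow> nat" where
  "min_deg n E = Min (deg E ` {..<n})"

definition max_deg :: "nat \<Rightarrow> (nat \<Rightarrow> nat \<Rightarrow> bool) \<Rightarrow> nat" where
  "max_deg n E = Max (deg E ` {..<n})"

definition adj_matrix :: "nat \<Rightarrow> (nat \<Rightarrow> nat \<Rightarrow> bool) \<Rightarrow> real mat" where
  "adj_matrix n E = mat n n (\<lambda>(i, j). if E i j then 1 else 0)"

text \<open>Adjacency eigenvalues mu_1 >= ... >= mu_n (with multiplicity), as the roots of the
  characteristic polynomial (which splits over the reals, the matrix being symmetric).\<close>
definition adj_eigenvalues :: "nat \<Rightarrow> (nat \<Rightarrow> nat \<Rightarrow> bool) \<Rightarrow> real list" where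
  "adj_eigenvalues n E = rev (sorted_list_of_multiset (proots (char_poly (adj_matrix n E))))"

definition spec_lambda :: "nat \<Rightarrow> (nat \<Rightarrow> nat \<Rightarrow> bool) \<Rightarrow> real" where
  "spec_lambda n E = max \<bar>adj_eigenvalues n E ! 1\<bar> \<bar>last (adj_eigenvalues n E)\<bar>"

definition expander_sequence :: "(nat \<Rightarrow> nat \<Rightarrow> nat \<Rightarrow> bool) \<Rightarrow> bool" where
  "expander_sequence G \<longleftrightarrow>
     (\<forall>n>0. simple_graph n (G n) \<and> graph_connected n (G n)) \<and>
     ((\<lambda>n. real (max_deg n (G n)) / real (min_deg n (G n))) \<longlonglongrightarrow> 1) \<and>
     ((\<lambda>n. spec_lambda n (G n) / real (max_deg n (G n))) \<longlonglongrightarrow> 0)"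

text \<open>One round of pull on the graph with edge relation E on {..<n}, success probability q,
  from informed set S: every uninformed vertex independently picks a uniformly random
  neighbour (None if it has none) and an independent success coin; it becomes informed iff
  the chosen neighbour is informed and the coin succeeds.\<close>
definition pull_choice :: "(nat \<Rightarrow> nat \<Rightarrow> bool) \<Rightarrow> real \<Rightarrow> nat \<Rightarrow> (nat option \<times> bool) pmf" where
  "pull_choice E q v =
     pair_pmf (if nbrs E v = {} then return_pmf None else map_pmf Some (pmf_of_set (nbrs E v)))
              (bernoulli_pmf q)"

definition pull_step :: "nat \<Rightarrow> (nat \<Rightarrow> nat \<Rightarrow> bool) \<Rightarrow> real \<Rightarrow> nat set \<Rightarrow> nat set pmf" where
  "pull_step n E q S =
     map_pmf (\<lambda>ch. S \<union> {v \<in> {..<n} - S. \<exists>u. fst (ch v) = Some u \<and> u \<in> S \<and> snd (ch v)})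
       (Pi_pmf ({..<n} - S) (None, False) (pull_choice E q))"

fun pull_rounds :: "nat \<Rightarrow> (nat \<Rightarrow> nat \<Rightarrow> bool) \<Rightarrow> real \<Rightarrow> nat \<Rightarrow> nat set \<Rightarrow> nat set pmf" where
  "pull_rounds n E q 0 S = return_pmf S"
| "pull_rounds n E q (Suc k) S = pull_step n E q S \<bind> pull_rounds n E q k"

end

theory Submission imports Defs "HOL-Real_Asymp.Real_Asymp" begin

lemma factor_bound:
  assumes "0 \<le> a" "a \<le> 1" "0 \<le> q" "q \<le> 1"
  shows "measure_pmf.expectation (pull_choice E q v)
           (\<lambda>y. if \<exists>u. fst y = Some u \<and> u \<in> S \<and> snd y then 1 else a) \<le> q + (1 - q) * a"
proof -
  have "measure_pmf.expectation (pull_choice E q v)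
           (\<lambda>y. if \<exists>u. fst y = Some u \<and> u \<in> S \<and> snd y then 1 else a)
        \<le> measure_pmf.expectation (pull_choice E q v) (\<lambda>y. (\<lambda>b. if b then 1 else a) (snd y))"
    apply (rule integral_mono)
    apply (rule measure_pmf.integrable_const_bound[where B="1"]; use assms in auto)
    apply (rule measure_pmf.integrable_const_bound[where B="1"]; use assms in auto)
    using assms by auto
  also have "\<dots> = measure_pmf.expectation (bernoulli_pmf q) (\<lambda>b. if b then 1 else a)"
    unfolding pull_choice_def by (rule expectation_pair_pmf_snd)
  also have "\<dots> = q + (1 - q) * a"
    using assms by simp
  finally show ?thesis .
qed

lemma step_bound:
  assumes "0 \<le> a" "a \<le> 1" "0 \<le> q" "q \<le> 1"
  shows "measure_pmf.expectation (pull_step n E q S) (\<lambda>S'. a ^ card ({..<n} - S'))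
           \<le> (q + (1 - q) * a) ^ card ({..<n} - S)"
proof -
  define U where "U = {..<n} - S"
  define f where "f = (\<lambda>(v::nat) y. if \<exists>u. fst y = Some u \<and> u \<in> S \<and> snd (y::nat option \<times> bool) then 1 else a)"
  have fin: "finite U" unfolding U_def by auto
  have eq: "a ^ card ({..<n} - (S \<union> {v \<in> U. \<exists>u. fst (ch v) = Some u \<and> u \<in> S \<and> snd (ch v)}))
           = (\<Prod>v\<in>U. f v (ch v))" for ch
  proof -
    have "{..<n} - (S \<union> {v \<in> U. \<exists>u. fst (ch v) = Some u \<and> u \<in> S \<and> snd (ch v)})
          = U \<inter> - {v. \<exists>u. fst (ch v) = Some u \<and> u \<in> S \<and> snd (ch v)}"
      unfolding U_def by auto
    moreover have "(\<Prod>v\<in>U. f v (ch v)) = (\<Prod>v\<in>U \<inter> {v. \<exists>u. fst (ch v) = Some u \<and> u \<in> S \<and> snd (ch v)}. 1)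
         * (\<Prod>v\<in>U \<inter> - {v. \<exists>u. fst (ch v) = Some u \<and> u \<in> S \<and> snd (ch v)}. a)"
      unfolding f_def using fin by (simp add: prod.If_cases)
    ultimately show ?thesis by simp
  qed
  have "measure_pmf.expectation (pull_step n E q S) (\<lambda>S'. a ^ card ({..<n} - S'))
     = measure_pmf.expectation (Pi_pmf U (None, False) (pull_choice E q)) (\<lambda>ch. \<Prod>v\<in>U. f v (ch v))"
    unfolding pull_step_def integral_map_pmf U_def[symmetric] eq by simp
  also have "\<dots> = (\<Prod>v\<in>U. measure_pmf.expectation (pull_choice E q v) (f v))"
    apply (rule expectation_prod_Pi_pmf[OF fin])
    apply (rule measure_pmf.integrable_const_bound[where B="1"]; use assms in \<open>auto simp: f_def\<close>)
    using assms by (auto simp: f_def)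
  also have "\<dots> \<le> (\<Prod>v\<in>U. q + (1 - q) * a)"
    apply (rule prod_mono)
    apply (intro conjI)
     apply (rule integral_nonneg_AE) using assms apply (auto simp: f_def)[1]
    unfolding f_def using factor_bound[OF assms] by blast
  also have "\<dots> = (q + (1 - q) * a) ^ card ({..<n} - S)" unfolding U_def by simp
  finally show ?thesis .
qed

lemma bind_prob: "measure_pmf.prob (bind_pmf M N) X = measure_pmf.expectation M (\<lambda>x. measure_pmf.prob (N x) X)"
proof -
  have i: "integrable (measure_pmf M) (\<lambda>x. measure_pmf.prob (N x) X)"
    by (rule measure_pmf.integrable_const_bound[where B=1]) auto
  have "ennreal (measure_pmf.prob (bind_pmf M N) X) = emeasure (measure_pmf (bind_pmf M N)) X"
    by (simp add: measure_pmf.emeasure_eq_measure)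
  also have "\<dots> = (\<integral>\<^sup>+x. emeasure (measure_pmf (N x)) X \<partial>M)"
    by (rule emeasure_bind_pmf)
  also have "\<dots> = (\<integral>\<^sup>+x. ennreal (measure_pmf.prob (N x) X) \<partial>M)"
    by (simp add: measure_pmf.emeasure_eq_measure)
  also have "\<dots> = ennreal (measure_pmf.expectation M (\<lambda>x. measure_pmf.prob (N x) X))"
    using i by (intro nn_integral_eq_integral) auto
  finally show ?thesis by (simp add: integral_nonneg_AE)
qed

lemma step_support:
  assumes "S \<subseteq> {..<n}" "S' \<in> set_pmf (pull_step n E q S)"
  shows "S' \<subseteq> {..<n}"
  using assms unfolding pull_step_def by auto

lemma rounds_bound:
  assumes "S \<subseteq> {..<n}" "0 \<le> q" "q \<le> 1"
  shows "measure_pmf.prob (pull_rounds n E q k S) {I. n \<le> card I}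
           \<le> (1 - (1 - q) ^ k) ^ card ({..<n} - S)"
  using assms(1)
proof (induction k arbitrary: S)
  case 0
  show ?case
  proof (cases "n \<le> card S")
    case True
    have "card S \<le> n" using card_mono[OF finite_lessThan 0] by simp
    then have "S = {..<n}" using 0 True card_subset_eq[OF finite_lessThan 0] by simp
    then show ?thesis by simp
  next
    case False
    then show ?thesis by simp
  qed
next
  case (Suc k)
  define a where "a = 1 - (1 - q) ^ k"
  have a: "0 \<le> a" "a \<le> 1" unfolding a_def using assms
    by (auto simp: power_le_one)
  have "measure_pmf.prob (pull_rounds n E q (Suc k) S) {I. n \<le> card I}
     = measure_pmf.expectation (pull_step n E q S) (\<lambda>S'. measure_pmf.prob (pull_rounds n E q k S') {I. n \<le> card I})"
    by (simp add: bind_prob)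
  also have "\<dots> \<le> measure_pmf.expectation (pull_step n E q S) (\<lambda>S'. a ^ card ({..<n} - S'))"
    apply (rule integral_mono_AE)
    apply (rule measure_pmf.integrable_const_bound[where B=1]; auto)
    apply (rule measure_pmf.integrable_const_bound[where B=1]; use a in \<open>auto simp: power_le_one\<close>)
    apply (rule AE_pmfI)
    unfolding a_def using Suc.IH step_support Suc.prems by blast
  also have "\<dots> \<le> (q + (1 - q) * a) ^ card ({..<n} - S)"
    by (rule step_bound[OF a assms(2,3)])
  also have "q + (1 - q) * a = 1 - (1 - q) ^ Suc k" unfolding a_def by (simp add: algebra_simps)
  finally show ?case .
qed

lemma lim_aux: assumes "e > 0" shows "(\<lambda>n::nat. 1 - exp (-(real n powr e)/2)) \<longlonglongrightarrow> 1"
  using assms by real_asymp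

lemma pointwise:
  fixes q c :: real and n :: nat
  assumes q: "0 < q" "q < 1" and n: "n \<ge> 1"
    and S: "S \<subseteq> {..<n}" "real (card S) \<le> real n / 2"
  shows "1 - exp (-(real n powr (1 - max 0 c))/2)
     \<le> measure_pmf.prob (pull_rounds n E q (nat \<lfloor>c * (- ln (real n) / ln (1 - q))\<rfloor>) S) {I. card I < n}"
proof -
  define k where "k = nat \<lfloor>c * (- ln (real n) / ln (1 - q))\<rfloor>"
  define d where "d = max 0 c"
  define L where "L = - ln (1 - q)"
  have L: "L > 0" unfolding L_def using q by simp
  have tau: "- ln (real n) / ln (1 - q) = ln (real n) / L" unfolding L_def by simp
  have lnn: "ln (real n) \<ge> 0" using n by simp
  have kle: "real k \<le> d * (ln (real n) / L)"
  proof (cases "c \<le> 0")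
    case True
    then have "c * (ln (real n) / L) \<le> 0" using L lnn by (simp add: mult_nonpos_nonneg divide_nonpos_pos)
    then have "k = 0" unfolding k_def tau by simp
    then show ?thesis unfolding d_def using L lnn by simp
  next
    case False
    then have "real k \<le> c * (ln (real n) / L)" unfolding k_def tau
      using L lnn by (simp add: of_nat_nat floor_le_iff) linarith?
    then show ?thesis unfolding d_def using False by simp
  qed
  define b where "b = (1 - q) ^ k"
  have b1: "b \<le> 1" "0 \<le> b" unfolding b_def using q by (auto simp: power_le_one)
  have "b = exp (- L * real k)" unfolding b_def L_def using q
    by (simp add: exp_of_nat_mult mult.commute[of "ln (1 - q)"])
  also have "\<dots> \<ge> exp (- L * (d * (ln (real n) / L)))" using kle L by (simp add: pos_le_divide_eq mult.commute)
  finally have "exp (- L * (d * (ln (real n) / L))) \<le> b" .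
  moreover have "exp (- L * (d * (ln (real n) / L))) = real n powr (- d)"
    using L n by (simp add: powr_def)
  ultimately have bge: "real n powr (- d) \<le> b" by simp
  define m where "m = card ({..<n} - S)"
  have m: "real m \<ge> real n / 2"
  proof -
    have "m = n - card S" unfolding m_def using S by (simp add: card_Diff_subset finite_subset)
    moreover have "card S \<le> n" using card_mono[OF finite_lessThan S(1)] by simp
    ultimately show ?thesis using S by simp
  qed
  have "measure_pmf.prob (pull_rounds n E q k S) {I. n \<le> card I} \<le> (1 - b) ^ m"
    unfolding b_def m_def using rounds_bound[OF S(1)] q by simp
  also have "\<dots> \<le> exp (- b) ^ m"
    using b1 by (intro power_mono) (auto simp: exp_ge_add_one_self[of "-b", simplified])
  also have "\<dots> = exp (- (b * real m))" by (simp add: exp_of_nat_mult[symmetric] mult.commute)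
  also have "\<dots> \<le> exp (- (real n powr (- d) * (real n / 2)))"
  proof -
    have "real n powr (- d) * (real n / 2) \<le> b * real m"
      by (rule mult_mono) (use bge m b1 in auto)
    then show ?thesis by simp
  qed
  also have "real n powr (- d) * (real n / 2) = real n powr (1 - d) / 2"
    using n by (simp add: powr_diff powr_minus divide_simps)
  finally have hi: "measure_pmf.prob (pull_rounds n E q k S) {I. n \<le> card I} \<le> exp (- (real n powr (1 - d) / 2))" .
  have "measure_pmf.prob (pull_rounds n E q k S) {I. card I < n}
       = 1 - measure_pmf.prob (pull_rounds n E q k S) {I. n \<le> card I}"
    using measure_pmf.prob_compl[of "{I. n \<le> card I}" "pull_rounds n E q k S"]
    by (simp add: Compl_eq_Diff_UNIV[symmetric] Collect_neg_eq[symmetric] not_le)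
  then show ?thesis using hi unfolding k_def[symmetric] d_def[symmetric] by simp
qed

theorem lemma3p3:
  fixes G H :: "nat \<Rightarrow> nat \<Rightarrow> nat \<Rightarrow> bool"
    and S :: "nat \<Rightarrow> nat set"
    and \<epsilon> q c :: real
  assumes eps: "0 < \<epsilon>" "\<epsilon> \<le> 1/2"
    and q: "0 < q" "q < 1"
    and exp: "expander_sequence G"
    and sub: "\<forall>n. simple_graph n (H n) \<and> (\<forall>u v. H n u v \<longrightarrow> G n u v)"
    and keep: "\<forall>n. \<forall>v<n. real (deg (H n) v) \<ge> (1/2 + \<epsilon>) * real (deg (G n) v)"
    and S: "\<forall>n. S n \<subseteq> {..<n} \<and> real (card (S n)) \<le> real n / 2"
    and c: "c < 1"
  shows "(\<lambda>n. measure_pmf.prob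
             (pull_rounds n (H n) q (nat \<lfloor>c * (- ln (real n) / ln (1 - q))\<rfloor>) (S n))
             {I. card I < n}) \<longlonglongrightarrow> 1"
proof (rule tendsto_sandwich[OF _ _ lim_aux[of "1 - max 0 c"] tendsto_const])
  show "1 - max 0 c > 0" using c by simp
  show "\<forall>\<^sub>F n in sequentially. 1 - exp (- (real n powr (1 - max 0 c)) / 2)
      \<le> measure_pmf.prob (pull_rounds n (H n) q (nat \<lfloor>c * (- ln (real n) / ln (1 - q))\<rfloor>) (S n)) {I. card I < n}"
    using eventually_ge_at_top[of "1::nat"]
  proof eventually_elim
    case (elim n)
    show ?case using pointwise[OF q elim, of "S n" c "H n"] S by simp
  qed
  show "\<forall>\<^sub>F n in sequentially. measure_pmf.prob
             (pull_rounds n (H n) q (nat \<lfloor>c * (- ln (real n) / ln (1 - q))\<rfloor>) (S n))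
             {I. card I < n} \<le> 1" by simp
qed
end
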